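(* Let $\Phi$ be an automorphism of the category $(Rep\text{-}R)^0$ with $\Phi((W_1,F_1))=(W_1,F_1)$, so that $\Phi$ restricts to a monoid automorphism of $End_1$. Then $$\Phi(T_e)=T_e,\quad \Phi(T_0)=T_0,\quad \Phi(T_x)=T_x,\quad \Phi(\nu_{(0,x)})=\nu_{(0,x)}.$$
   Context: $R$ is a commutative associative ring with unit. A group representation $(A,G,\cdot)$ is a unital $R$-module $A$ with a right action of the group $G$ by $R$-module automorphisms. A homomorphism is a pair $(\mu^{(1)},\mu^{(2)})$ (an $R$-linear map and a group homomorphism) with $\mu^{(1)}(a\cdot g)=\mu^{(1)}(a)\bullet\mu^{(2)}(g)$. A free representation over a pair of sets $(Y,X)$ is $(W,F)$, where $F$ is the free group on $X$ and $W$ is the free right $RF$-module on $Y$, with $F$ acting by right multiplication. $(Rep\text{-}R)^0$ is the category of free representations over pairs $(Y,X)$ of finite subsets of fixed infinite sets $Y_0,X_0$, with all homomorphisms. $(W_1,F_1)$ is the free representation with one module generator and one group generator: $F_1=\langle x\rangle$ is infinite cyclic with identity $e$, and $W_1=RF_1$. $End_1$ is its endomorphism monoid, and $\nu_{(w,g)}$ is the endomorphism with $1\mapsto w$, $x\mapsto g$. Finally, $$T_e=\{\nu_{(w,e)}:w\in W_1\},\quad T_0=\{\nu_{(0,g)}:g\in F_1\},\quad T_x=\{\nu_{(w,x)}:w\in W_1\}.$$ *)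

theory Defs
  imports Main
begin

type_synonym 'x word = "('x \<times> bool) list"

definition inv_letter :: "'x \<times> bool \<Rightarrow> 'x \<times> bool" where
  "inv_letter l = (fst l, \<not> snd l)"

fun reduced :: "'x word \<Rightarrow> bool" where
  "reduced (a # b # w) = (b \<noteq> inv_letter a \<and> reduced (b # w))"
| "reduced _ = True"

definition prepend :: "'x \<times> bool \<Rightarrow> 'x word \<Rightarrow> 'x word" where
  "prepend l w = (case w of [] \<Rightarrow> [l] | m # w' \<Rightarrow> if m = inv_letter l then w' else l # w)"

definition fg_mult :: "'x word \<Rightarrow> 'x word \<Rightarrow> 'x word" where
  "fg_mult u v = foldr prepend u v"

definition fg_inv :: "'x word \<Rightarrow> 'x word" where
  "fg_inv u = rev (map inv_letter u)"

definition FG :: "'x set \<Rightarrow> 'x word set" where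
  "FG X = {w. reduced w \<and> fst ` set w \<subseteq> X}"

text \<open>W = free right RF-module on Y = free R-module with basis Y \<times> F.
  An element is a finitely supported function Y \<times> F \<rightarrow> R.\<close>
type_synonym ('y,'x,'r) elt = "'y \<Rightarrow> 'x word \<Rightarrow> 'r"

definition Wmod :: "'y set \<Rightarrow> 'x set \<Rightarrow> ('y,'x,'r::comm_ring_1) elt set" where
  "Wmod Y X = {a. finite {(y,f). a y f \<noteq> 0} \<and>
                 (\<forall>y f. a y f \<noteq> 0 \<longrightarrow> y \<in> Y \<and> f \<in> FG X)}"

definition zeroW :: "('y,'x,'r::comm_ring_1) elt" where
  "zeroW = (\<lambda>y f. 0)"

definition delta :: "'y \<Rightarrow> 'x word \<Rightarrow> ('y,'x,'r::comm_ring_1) elt" where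
  "delta y0 f0 = (\<lambda>y f. if y = y0 \<and> f = f0 then 1 else 0)"

definition act :: "('y,'x,'r::comm_ring_1) elt \<Rightarrow> 'x word \<Rightarrow> ('y,'x,'r) elt" where
  "act a g = (\<lambda>y h. if reduced h then a y (fg_mult h (fg_inv g)) else 0)"

type_synonym ('y,'x,'r) mor = "(('y,'x,'r) elt \<Rightarrow> ('y,'x,'r) elt) \<times> ('x word \<Rightarrow> 'x word)"

definition Obj :: "'y set \<Rightarrow> 'x set \<Rightarrow> ('y set \<times> 'x set) set" where
  "Obj Y0 X0 = {(Y,X). finite Y \<and> Y \<subseteq> Y0 \<and> finite X \<and> X \<subseteq> X0}"

text \<open>Homomorphisms (mu1, mu2), represented extensionally (mu1 = 0 outside W, mu2 = e outside F).\<close>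
definition Hom :: "('y set \<times> 'x set) \<Rightarrow> ('y set \<times> 'x set) \<Rightarrow> ('y,'x,'r::comm_ring_1) mor set" where
  "Hom A B = {(m1, m2).
     (\<forall>a \<in> Wmod (fst A) (snd A). m1 a \<in> Wmod (fst B) (snd B)) \<and>
     (\<forall>a \<in> Wmod (fst A) (snd A). \<forall>b \<in> Wmod (fst A) (snd A).
         m1 (\<lambda>y f. a y f + b y f) = (\<lambda>y f. m1 a y f + m1 b y f)) \<and>
     (\<forall>r. \<forall>a \<in> Wmod (fst A) (snd A). m1 (\<lambda>y f. r * a y f) = (\<lambda>y f. r * m1 a y f)) \<and>
     (\<forall>g \<in> FG (snd A). m2 g \<in> FG (snd B)) \<and>
     (\<forall>g \<in> FG (snd A). \<forall>h \<in> FG (snd A). m2 (fg_mult g h) = fg_mult (m2 g) (m2 h)) \<and>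
     (\<forall>a \<in> Wmod (fst A) (snd A). \<forall>g \<in> FG (snd A). m1 (act a g) = act (m1 a) (m2 g)) \<and>
     (\<forall>a. a \<notin> Wmod (fst A) (snd A) \<longrightarrow> m1 a = zeroW) \<and>
     (\<forall>g. g \<notin> FG (snd A) \<longrightarrow> m2 g = [])}"

definition idm :: "('y set \<times> 'x set) \<Rightarrow> ('y,'x,'r::comm_ring_1) mor" where
  "idm A = ((\<lambda>a. if a \<in> Wmod (fst A) (snd A) then a else zeroW),
            (\<lambda>g. if g \<in> FG (snd A) then g else []))"

definition comp :: "('y,'x,'r::comm_ring_1) mor \<Rightarrow> ('y,'x,'r) mor \<Rightarrow> ('y,'x,'r) mor" where
  "comp g f = (fst g \<circ> fst f, snd g \<circ> snd f)"

definition cat_automorphism ::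
  "'y set \<Rightarrow> 'x set \<Rightarrow> ('y set \<times> 'x set \<Rightarrow> 'y set \<times> 'x set) \<Rightarrow>
   ('y set \<times> 'x set \<Rightarrow> 'y set \<times> 'x set \<Rightarrow> ('y,'x,'r::comm_ring_1) mor \<Rightarrow> ('y,'x,'r) mor) \<Rightarrow> bool" where
  "cat_automorphism Y0 X0 Po Pm \<longleftrightarrow>
     bij_betw Po (Obj Y0 X0) (Obj Y0 X0) \<and>
     (\<forall>A \<in> Obj Y0 X0. \<forall>B \<in> Obj Y0 X0. bij_betw (Pm A B) (Hom A B) (Hom (Po A) (Po B))) \<and>
     (\<forall>A \<in> Obj Y0 X0. Pm A A (idm A) = idm (Po A)) \<and>
     (\<forall>A \<in> Obj Y0 X0. \<forall>B \<in> Obj Y0 X0. \<forall>C \<in> Obj Y0 X0. \<forall>f \<in> Hom A B. \<forall>g \<in> Hom B C.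
        Pm A C (comp g f) = comp (Pm B C g) (Pm A B f))"

text \<open>(W_1,F_1) is the free representation over ({y1},{x1}); its module generator "1"
  is delta y1 [] and the group generator x is the word [(x1,True)].\<close>
definition nu :: "'y \<Rightarrow> 'x \<Rightarrow> ('y,'x,'r::comm_ring_1) elt \<Rightarrow> 'x word \<Rightarrow> ('y,'x,'r) mor" where
  "nu y1 x1 w g = (THE m. m \<in> Hom ({y1},{x1}) ({y1},{x1}) \<and>
                       fst m (delta y1 []) = w \<and> snd m [(x1,True)] = g)"

definition T_e :: "'y \<Rightarrow> 'x \<Rightarrow> ('y,'x,'r::comm_ring_1) mor set" where
  "T_e y1 x1 = {nu y1 x1 w [] | w. w \<in> Wmod {y1} {x1}}"

definition T_0 :: "'y \<Rightarrow> 'x \<Rightarrow> ('y,'x,'r::comm_ring_1) mor set" where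
  "T_0 y1 x1 = {nu y1 x1 zeroW g | g. g \<in> FG {x1}}"

definition T_x :: "'y \<Rightarrow> 'x \<Rightarrow> ('y,'x,'r::comm_ring_1) mor set" where
  "T_x y1 x1 = {nu y1 x1 w [(x1,True)] | w. w \<in> Wmod {y1} {x1}}"

end

theory Submission
  imports Defs "HOL-Library.Groups_Big_Fun"
begin


lemma inv_inv[simp]: "inv_letter (inv_letter l) = l"
  by (simp add: inv_letter_def)

lemma inv_neq[simp]: "inv_letter l \<noteq> l" "l \<noteq> inv_letter l"
  by (auto simp add: inv_letter_def prod_eq_iff)

lemma reduced_tl: "reduced (a # w) \<Longrightarrow> reduced w"
  by (cases w) auto

lemma prepend_reduced: "reduced u \<Longrightarrow> reduced (prepend l u)"
  by (cases u) (auto simp: prepend_def dest: reduced_tl)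

lemma prepend_cancel: "reduced u \<Longrightarrow> prepend l (prepend (inv_letter l) u) = u"
proof (cases u)
  case Nil then show ?thesis by (simp add: prepend_def)
next
  case (Cons m u')
  assume r: "reduced u"
  show ?thesis
  proof (cases "m = l")
    case True
    then have "prepend (inv_letter l) u = u'" using Cons by (simp add: prepend_def)
    moreover have "prepend l u' = u"
      using r Cons True by (cases u') (auto simp: prepend_def)
    ultimately show ?thesis by simp
  next
    case False
    then show ?thesis using Cons by (simp add: prepend_def)
  qed
qed

lemma fg_mult_Cons[simp]: "fg_mult (l # u) v = prepend l (fg_mult u v)"
  by (simp add: fg_mult_def)
lemma fg_mult_Nil[simp]: "fg_mult [] v = v"
  by (simp add: fg_mult_def)
lemma fg_mult_append: "fg_mult (u @ u') v = fg_mult u (fg_mult u' v)"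
  by (simp add: fg_mult_def)

lemma fg_mult_reduced: "reduced v \<Longrightarrow> reduced (fg_mult u v)"
  by (induction u) (auto intro: prepend_reduced)

lemma fg_mult_prepend: "reduced v \<Longrightarrow> reduced c \<Longrightarrow> fg_mult (prepend l v) c = prepend l (fg_mult v c)"
proof (cases v)
  case Nil then show ?thesis by (simp add: prepend_def)
next
  case (Cons m v')
  assume rv: "reduced v" and rc: "reduced c"
  show ?thesis
  proof (cases "m = inv_letter l")
    case True
    then have "prepend l v = v'" using Cons by (simp add: prepend_def)
    moreover have "prepend l (fg_mult v c) = fg_mult v' c"
      using Cons True prepend_cancel[OF fg_mult_reduced[OF rc], of l v'] by simp
    ultimately show ?thesis by simp
  next
    case False
    then show ?thesis using Cons by (simp add: prepend_def)
  qed
qed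

lemma fg_assoc: "reduced b \<Longrightarrow> reduced c \<Longrightarrow> fg_mult (fg_mult a b) c = fg_mult a (fg_mult b c)"
  by (induction a) (auto simp: fg_mult_prepend fg_mult_reduced)

lemma fg_inv_Cons[simp]: "fg_inv (l # v) = fg_inv v @ [inv_letter l]"
  by (simp add: fg_inv_def)

lemma fg_inv_left: "reduced u \<Longrightarrow> fg_mult (fg_inv v) (fg_mult v u) = u"
proof (induction v arbitrary: u)
  case Nil then show ?case by (simp add: fg_inv_def)
next
  case (Cons l v)
  have "fg_mult (fg_inv (l # v)) (fg_mult (l # v) u) = fg_mult (fg_inv v) (prepend (inv_letter l) (prepend l (fg_mult v u)))"
    by (simp add: fg_mult_append)
  also have "\<dots> = fg_mult (fg_inv v) (fg_mult v u)"
    using prepend_cancel[of "fg_mult v u" "inv_letter l"] fg_mult_reduced[OF Cons.prems] by simp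
  also have "\<dots> = u" using Cons by simp
  finally show ?case .
qed

lemma fg_inv_right: "reduced u \<Longrightarrow> fg_mult v (fg_mult (fg_inv v) u) = u"
proof (induction v arbitrary: u)
  case Nil then show ?case by (simp add: fg_inv_def)
next
  case (Cons l v)
  have "fg_mult (l # v) (fg_mult (fg_inv (l # v)) u) = prepend l (fg_mult v (fg_mult (fg_inv v) (prepend (inv_letter l) u)))"
    by (simp add: fg_mult_append)
  also have "\<dots> = prepend l (prepend (inv_letter l) u)"
    using Cons.IH[OF prepend_reduced[OF Cons.prems]] by simp
  also have "\<dots> = u" by (rule prepend_cancel[OF Cons.prems])
  finally show ?case .
qed

lemma fg_mult_Nil_right: "reduced u \<Longrightarrow> fg_mult u [] = u"
proof (induction u)
  case Nil then show ?case by simp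
next
  case (Cons l u)
  then have "reduced u" using reduced_tl by blast
  with Cons show ?case by (cases u) (auto simp: prepend_def)
qed

lemma reduced_snoc: "reduced (w @ [a]) \<longleftrightarrow> reduced w \<and> (w = [] \<or> a \<noteq> inv_letter (last w))"
proof (induction w rule: reduced.induct)
  case (1 a b w) then show ?case by auto
qed auto

lemma fg_inv_reduced: "reduced v \<Longrightarrow> reduced (fg_inv v)"
proof (induction v)
  case Nil then show ?case by (simp add: fg_inv_def)
next
  case (Cons l v)
  then have rv: "reduced v" using reduced_tl by blast
  have "v \<noteq> [] \<Longrightarrow> hd v \<noteq> inv_letter l" using Cons.prems by (cases v) auto
  moreover have "v \<noteq> [] \<Longrightarrow> last (fg_inv v) = inv_letter (hd v)"
    by (cases v) (auto simp: fg_inv_def)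
  ultimately show ?case using Cons.IH[OF rv]
    by (auto simp: reduced_snoc fg_inv_def)
qed

lemma fg_cancel_right: "reduced h \<Longrightarrow> reduced v \<Longrightarrow> fg_mult (fg_mult h v) (fg_inv v) = h"
proof -
  assume rh: "reduced h" and rv: "reduced v"
  have "fg_mult (fg_mult h v) (fg_inv v) = fg_mult h (fg_mult v (fg_inv v))"
    by (rule fg_assoc[OF rv fg_inv_reduced[OF rv]])
  also have "fg_mult v (fg_inv v) = []"
    using fg_inv_right[of "[]" v] fg_mult_Nil_right[OF fg_inv_reduced[OF rv]] by simp
  finally show ?thesis using fg_mult_Nil_right rh by simp
qed




definition pw :: "'x \<Rightarrow> int \<Rightarrow> 'x word" where
  "pw x1 n = (if 0 \<le> n then replicate (nat n) (x1,True) else replicate (nat (-n)) (x1,False))"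

definition idx :: "'x word \<Rightarrow> int" where
  "idx w = (if w \<noteq> [] \<and> \<not> snd (hd w) then - int (length w) else int (length w))"

lemma idx_pw[simp]: "idx (pw x1 n) = n"
  by (cases "n = 0") (auto simp: pw_def idx_def hd_replicate)

lemma pw_inj[simp]: "pw x1 a = pw x1 b \<longleftrightarrow> a = b"
  by (metis idx_pw)

lemma pw_0[simp]: "pw x1 0 = []"
  by (simp add: pw_def)

lemma reduced_replicate: "reduced (replicate k l)"
proof (induction k)
  case (Suc k) then show ?case by (cases k) auto
qed simp

lemma pw_FG[simp]: "pw x1 n \<in> FG {x1}"
  by (auto simp: pw_def FG_def reduced_replicate)

lemma FG_rep: "reduced w \<Longrightarrow> fst ` set w \<subseteq> {x1} \<Longrightarrow> \<exists>b k. w = replicate k (x1,b)"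
proof (induction w)
  case Nil then show ?case by auto
next
  case (Cons a w)
  have "reduced w" using Cons.prems(1) by (rule reduced_tl)
  moreover have "fst ` set w \<subseteq> {x1}" using Cons.prems(2) by auto
  ultimately obtain b k where w: "w = replicate k (x1,b)" using Cons.IH by blast
  obtain b0 where a: "a = (x1,b0)" using Cons.prems(2) by (cases a) auto
  show ?case
  proof (cases k)
    case 0 then have "a # w = replicate 1 (x1,b0)" using w a by simp
    then show ?thesis by blast
  next
    case (Suc k')
    then have "b = b0" using Cons.prems(1) w a by (auto simp: inv_letter_def)
    then have "a # w = replicate (Suc k) (x1,b)" using w a by simp
    then show ?thesis by blast
  qed
qed

lemma FG_pw: "w \<in> FG {x1} \<Longrightarrow> w = pw x1 (idx w)"
proof -
  assume "w \<in> FG {x1}"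
  then have "reduced w" "fst ` set w \<subseteq> {x1}" by (auto simp: FG_def)
  from FG_rep[OF this] obtain b k where w: "w = replicate k (x1,b)" by blast
  show ?thesis
  proof (cases k)
    case 0 then show ?thesis using w by (simp add: idx_def)
  next
    case (Suc k')
    show ?thesis
    proof (cases b)
      case True
      then have "idx w = int k" using w Suc by (simp add: idx_def)
      then show ?thesis using w True by (simp add: pw_def)
    next
      case False
      then have "idx w = - int k" using w Suc by (simp add: idx_def)
      moreover have "k > 0" using Suc by simp
      ultimately show ?thesis using w False by (simp add: pw_def)
    qed
  qed
qed

lemma FG_pw_iff: "w \<in> FG {x1} \<longleftrightarrow> (\<exists>n. w = pw x1 n)"
proof
  assume "w \<in> FG {x1}" then have "w = pw x1 (idx w)" by (rule FG_pw)
  then show "\<exists>n. w = pw x1 n" by (rule exI)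
next
  assume "\<exists>n. w = pw x1 n" then obtain n where "w = pw x1 n" by blast
  then show "w \<in> FG {x1}" by (simp only: pw_FG)
qed

lemma prepend_rep_same: "prepend l (replicate k l) = replicate (Suc k) l"
  by (cases k) (auto simp: prepend_def)

lemma prepend_rep_inv: "prepend (inv_letter l) (replicate (Suc k) l) = replicate k l"
  by (simp add: prepend_def)

lemma prepend_T: "prepend (x1,True) (pw x1 n) = pw x1 (n+1)"
proof (cases "0 \<le> n")
  case True
  then have "pw x1 n = replicate (nat n) (x1,True)" "pw x1 (n+1) = replicate (Suc (nat n)) (x1,True)"
    by (auto simp: pw_def nat_add_distrib)
  then show ?thesis by (simp add: prepend_rep_same)
next
  case False
  then obtain k where k: "nat (-n) = Suc k" by (cases "nat (-n)") auto
  have "(x1,True) = inv_letter (x1,False)" by (simp add: inv_letter_def)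
  moreover have "pw x1 n = replicate (Suc k) (x1,False)" using False k by (simp add: pw_def)
  moreover have "pw x1 (n+1) = replicate k (x1,False)"
  proof (cases "n + 1 = 0")
    case True then show ?thesis using k by simp
  next
    case False
    then have "nat (-(n+1)) = k" using k by linarith
    then show ?thesis using False \<open>\<not> 0 \<le> n\<close> by (simp add: pw_def)
  qed
  ultimately show ?thesis by (simp only: prepend_rep_inv)
qed

lemma prepend_F: "prepend (x1,False) (pw x1 n) = pw x1 (n-1)"
proof (cases "0 < n")
  case True
  then obtain k where k: "nat n = Suc k" by (cases "nat n") auto
  have "(x1,False) = inv_letter (x1,True)" by (simp add: inv_letter_def)
  moreover have "pw x1 n = replicate (Suc k) (x1,True)" using True k by (simp add: pw_def)
  moreover have "pw x1 (n-1) = replicate k (x1,True)"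
    using True k by (simp add: pw_def nat_diff_distrib)
  ultimately show ?thesis by (simp only: prepend_rep_inv)
next
  case False
  have e: "nat (1 - n) = Suc (nat (-n))" using False by (subst nat_eq_iff) auto
  have "pw x1 n = replicate (nat (-n)) (x1,False)" using False by (auto simp: pw_def)
  moreover have "pw x1 (n-1) = replicate (Suc (nat (-n))) (x1,False)"
    using False by (simp add: pw_def e[symmetric])
  ultimately show ?thesis by (simp add: prepend_rep_same)
qed

lemma mult_repT: "fg_mult (replicate k (x1,True)) (pw x1 b) = pw x1 (int k + b)"
  by (induction k) (auto simp: prepend_T add.commute add.left_commute)

lemma mult_repF: "fg_mult (replicate k (x1,False)) (pw x1 b) = pw x1 (b - int k)"
  by (induction k) (auto simp: prepend_F algebra_simps)

lemma pw_mult[simp]: "fg_mult (pw x1 a) (pw x1 b) = pw x1 (a + b)"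
  by (auto simp: pw_def[of x1 a] mult_repT mult_repF)

lemma fg_inv_pw[simp]: "fg_inv (pw x1 a) = pw x1 (- a)"
  by (auto simp: pw_def fg_inv_def inv_letter_def)

lemma idx_mult: "g \<in> FG {x1} \<Longrightarrow> h \<in> FG {x1} \<Longrightarrow> idx (fg_mult g h) = idx g + idx h"
proof -
  assume "g \<in> FG {x1}" "h \<in> FG {x1}"
  then obtain a b where "g = pw x1 a" "h = pw x1 b" unfolding FG_pw_iff by blast
  then show ?thesis by simp
qed

lemma fg_mult_FG: "g \<in> FG {x1} \<Longrightarrow> h \<in> FG {x1} \<Longrightarrow> fg_mult g h \<in> FG {x1}"
proof -
  assume "g \<in> FG {x1}" "h \<in> FG {x1}"
  then obtain a b where "g = pw x1 a" "h = pw x1 b" unfolding FG_pw_iff by blast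
  then show ?thesis by simp
qed

lemma FG_reduced: "g \<in> FG X \<Longrightarrow> reduced g"
  by (simp add: FG_def)




context fixes y1 :: 'y and x1 :: 'x
begin

definition coef :: "('y,'x,'r::comm_ring_1) elt \<Rightarrow> int \<Rightarrow> 'r" where
  "coef a n = a y1 (pw x1 n)"

definition emb :: "(int \<Rightarrow> 'r::comm_ring_1) \<Rightarrow> ('y,'x,'r) elt" where
  "emb c = (\<lambda>y h. if y = y1 \<and> h \<in> FG {x1} then c (idx h) else 0)"

lemma coef_emb[simp]: "coef (emb c) = c"
  by (simp add: coef_def emb_def fun_eq_iff)

lemma emb_inj: "emb c = emb d \<Longrightarrow> c = d"
  by (metis coef_emb)

lemma Wmod_emb: "finite {n. c n \<noteq> 0} \<Longrightarrow> emb c \<in> Wmod {y1} {x1}"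
proof -
  assume f: "finite {n. c n \<noteq> 0}"
  have "{(y,h). emb c y h \<noteq> 0} \<subseteq> (\<lambda>n. (y1, pw x1 n)) ` {n. c n \<noteq> 0}"
  proof
    fix p assume "p \<in> {(y,h). emb c y h \<noteq> 0}"
    then obtain y h where p: "p = (y,h)" and nz: "emb c y h \<noteq> 0" by blast
    then have "y = y1" "h \<in> FG {x1}" "c (idx h) \<noteq> 0" by (auto simp: emb_def split: if_splits)
    then show "p \<in> (\<lambda>n. (y1, pw x1 n)) ` {n. c n \<noteq> 0}"
      using p FG_pw[of h x1] by (intro image_eqI[of _ _ "idx h"]) auto
  qed
  then have "finite {(y,h). emb c y h \<noteq> 0}" using f by (rule finite_subset[OF _ finite_imageI])
  then show ?thesis by (auto simp: Wmod_def emb_def split: if_splits)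
qed

lemma Wmod_D:
  assumes "a \<in> Wmod {y1} {x1}"
  shows "finite {n. coef a n \<noteq> 0}" "a = emb (coef a)"
proof -
  have fin: "finite {(y,f). a y f \<noteq> 0}" and sup: "\<And>y f. a y f \<noteq> 0 \<Longrightarrow> y = y1 \<and> f \<in> FG {x1}"
    using assms by (auto simp: Wmod_def)
  have "{n. coef a n \<noteq> 0} \<subseteq> (\<lambda>p. idx (snd p)) ` {(y,f). a y f \<noteq> 0}"
  proof
    fix n assume "n \<in> {n. coef a n \<noteq> 0}"
    then have "(y1, pw x1 n) \<in> {(y,f). a y f \<noteq> 0}" by (simp add: coef_def)
    then show "n \<in> (\<lambda>p. idx (snd p)) ` {(y,f). a y f \<noteq> 0}" by (intro image_eqI) auto
  qed
  then show "finite {n. coef a n \<noteq> 0}" using fin by (rule finite_subset[OF _ finite_imageI])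
  show "a = emb (coef a)"
  proof (intro ext)
    fix y h
    show "a y h = emb (coef a) y h"
    proof (cases "a y h = 0")
      case True
      then show ?thesis using FG_pw[of h x1] by (auto simp: emb_def coef_def)
    next
      case False
      then have "y = y1" "h \<in> FG {x1}" using sup by auto
      then show ?thesis using FG_pw[of h x1] by (auto simp: emb_def coef_def)
    qed
  qed
qed

lemma Wmod_iff: "a \<in> Wmod {y1} {x1} \<longleftrightarrow> (\<exists>c. finite {n. c n \<noteq> 0} \<and> a = emb c)"
  using Wmod_D Wmod_emb by blast

lemma emb_add: "(\<lambda>y f. emb c y f + emb d y f) = emb (\<lambda>n. c n + d n)"
  by (auto simp: emb_def fun_eq_iff)

lemma emb_smult: "(\<lambda>y f. r * emb c y f) = emb (\<lambda>n. r * c n)"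
  by (auto simp: emb_def fun_eq_iff)

lemma emb_zero: "emb (\<lambda>n. 0) = zeroW"
  by (auto simp: emb_def zeroW_def fun_eq_iff)

lemma fin_add: "finite {n. c n \<noteq> 0} \<Longrightarrow> finite {n. d n \<noteq> 0} \<Longrightarrow> finite {n. (c n + d n :: 'r::comm_ring_1) \<noteq> 0}"
  by (rule finite_subset[of _ "{n. c n \<noteq> 0} \<union> {n. d n \<noteq> 0}"]) auto

lemma fin_smult: "finite {n. c n \<noteq> 0} \<Longrightarrow> finite {n. (r * c n :: 'r::comm_ring_1) \<noteq> 0}"
  by (rule finite_subset[of _ "{n. c n \<noteq> 0}"]) auto

lemma Wmod_add: "a \<in> Wmod {y1} {x1} \<Longrightarrow> b \<in> Wmod {y1} {x1} \<Longrightarrow> (\<lambda>y f. a y f + b y f) \<in> Wmod {y1} {x1}"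
proof -
  assume a: "a \<in> Wmod {y1} {x1}" and b: "b \<in> Wmod {y1} {x1}"
  have "(\<lambda>y f. a y f + b y f) = (\<lambda>y f. emb (coef a) y f + emb (coef b) y f)"
    using Wmod_D(2)[OF a] Wmod_D(2)[OF b] by simp
  also have "\<dots> = emb (\<lambda>n. coef a n + coef b n)" by (rule emb_add)
  finally show ?thesis using Wmod_emb[OF fin_add[OF Wmod_D(1)[OF a] Wmod_D(1)[OF b]]] by simp
qed

lemma Wmod_smult: "a \<in> Wmod {y1} {x1} \<Longrightarrow> (\<lambda>y f. r * a y f) \<in> Wmod {y1} {x1}"
proof -
  assume a: "a \<in> Wmod {y1} {x1}"
  have "(\<lambda>y f. r * a y f) = (\<lambda>y f. r * emb (coef a) y f)"
    using Wmod_D(2)[OF a] by simp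
  also have "\<dots> = emb (\<lambda>n. r * coef a n)" by (rule emb_smult)
  finally show ?thesis using Wmod_emb[OF fin_smult[OF Wmod_D(1)[OF a]]] by simp
qed

lemma coef_add: "coef (\<lambda>y f. a y f + b y f) = (\<lambda>n. coef a n + coef b n)"
  by (simp add: coef_def fun_eq_iff)

lemma coef_smult: "coef (\<lambda>y f. r * a y f) = (\<lambda>n. r * coef a n)"
  by (simp add: coef_def fun_eq_iff)

lemma zeroW_Wmod: "zeroW \<in> Wmod {y1} {x1}"
  using Wmod_emb[of "\<lambda>n. 0"] by (simp add: emb_zero)

lemma delta_emb: "delta y1 [] = emb (\<lambda>n. if n = 0 then 1 else 0)"
proof (intro ext)
  fix y h
  show "delta y1 [] y h = emb (\<lambda>n. if n = 0 then 1 else 0) y h"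
  proof (cases "y = y1 \<and> h \<in> FG {x1}")
    case True
    then have "h = pw x1 (idx h)" using FG_pw[of h x1] by blast
    then have "h = [] \<longleftrightarrow> idx h = 0" by (metis idx_pw pw_0)
    then show ?thesis using True by (auto simp: delta_def emb_def)
  next
    case False
    then show ?thesis using pw_FG[of x1 0] by (auto simp: delta_def emb_def)
  qed
qed

lemma act_emb: "act (emb c) (pw x1 j) = emb (\<lambda>n. c (n - j))"
proof (intro ext)
  fix y h
  show "act (emb c) (pw x1 j) y h = emb (\<lambda>n. c (n - j)) y h"
  proof (cases "reduced h")
    case False
    then have "h \<notin> FG {x1}" by (auto simp: FG_def)
    then show ?thesis using False by (simp add: act_def emb_def)
  next
    case True
    show ?thesis
    proof (cases "h \<in> FG {x1}")
      case hin: True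
      then have "h = pw x1 (idx h)" by (rule FG_pw)
      then have "fg_mult h (fg_inv (pw x1 j)) = pw x1 (idx h - j)"
        by (metis fg_inv_pw pw_mult diff_conv_add_uminus)
      then show ?thesis using True hin by (simp add: act_def emb_def)
    next
      case hout: False
      have "fg_mult h (fg_inv (pw x1 j)) \<notin> FG {x1}"
      proof
        assume "fg_mult h (fg_inv (pw x1 j)) \<in> FG {x1}"
        then obtain m where m: "fg_mult h (pw x1 (-j)) = pw x1 m" using FG_pw by fastforce
        have "h = fg_mult (fg_mult h (pw x1 (-j))) (fg_inv (pw x1 (-j)))"
          using fg_cancel_right[OF True, of "pw x1 (-j)"] pw_FG[of x1 "-j"] FG_reduced by metis
        also have "\<dots> = pw x1 (m + j)" using m by simp
        finally show False using hout pw_FG by metis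
      qed
      then show ?thesis using True hout by (simp add: act_def emb_def)
    qed
  qed
qed

end



abbreviation fin :: "(int \<Rightarrow> 'r::zero) \<Rightarrow> bool" where
  "fin c \<equiv> finite {n. c n \<noteq> 0}"

definition conv :: "(int \<Rightarrow> 'r::comm_ring_1) \<Rightarrow> int \<Rightarrow> (int \<Rightarrow> 'r) \<Rightarrow> int \<Rightarrow> 'r" where
  "conv cw k ca n = Sum_any (\<lambda>i. ca i * cw (n - k * i))"

lemma fin_mult_left: "fin ca \<Longrightarrow> finite {i. (ca i * (g i :: 'r::comm_ring_1)) \<noteq> 0}"
  by (rule finite_subset[of _ "{n. ca n \<noteq> 0}"]) auto

lemma conv_fin: "fin cw \<Longrightarrow> fin ca \<Longrightarrow> fin (conv cw k ca)"
proof -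
  assume fw: "fin cw" and fa: "fin ca"
  have "{n. conv cw k ca n \<noteq> 0} \<subseteq> (\<lambda>(i,l). k*i + l) ` ({i. ca i \<noteq> 0} \<times> {l. cw l \<noteq> 0})"
  proof
    fix n assume "n \<in> {n. conv cw k ca n \<noteq> 0}"
    then have "Sum_any (\<lambda>i. ca i * cw (n - k * i)) \<noteq> 0" by (simp add: conv_def)
    then obtain i where "ca i * cw (n - k * i) \<noteq> 0" by (rule Sum_any.not_neutral_obtains_not_neutral)
    then have "ca i \<noteq> 0" "cw (n - k*i) \<noteq> 0" by auto
    then show "n \<in> (\<lambda>(i,l). k*i + l) ` ({i. ca i \<noteq> 0} \<times> {l. cw l \<noteq> 0})"
      by (intro image_eqI[of _ _ "(i, n - k*i)"]) auto
  qed
  moreover have "finite ((\<lambda>(i,l). k*i + l) ` ({i. ca i \<noteq> 0} \<times> {l. cw l \<noteq> 0}))"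
    using fw fa by simp
  ultimately show ?thesis by (rule finite_subset)
qed

lemma conv_add: "fin ca \<Longrightarrow> fin cb \<Longrightarrow> conv cw k (\<lambda>n. ca n + cb n) = (\<lambda>n. conv cw k ca n + conv cw k cb n)"
  by (auto simp: conv_def fun_eq_iff distrib_right Sum_any.distrib[OF fin_mult_left fin_mult_left])

lemma conv_smult: "fin ca \<Longrightarrow> conv cw k (\<lambda>n. r * ca n) = (\<lambda>n. r * conv cw k ca n)"
  by (auto simp: conv_def fun_eq_iff Sum_any_right_distrib[OF fin_mult_left] mult.assoc)

lemma bij_plus: "bij (\<lambda>i::int. i + j)"
  by (rule bijI) (auto simp: inj_def surj_def intro!: exI[of _ "_ - j"])

lemma conv_shift: "conv cw k (\<lambda>n. ca (n - j)) = (\<lambda>n. conv cw k ca (n - k*j))"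
proof (intro ext)
  fix n
  have "Sum_any (\<lambda>i. ca (i - j) * cw (n - k * i)) = Sum_any (\<lambda>i. ca i * cw (n - k * j - k * i))"
    by (rule Sum_any.reindex_cong[OF bij_plus[of j]]) (auto simp: fun_eq_iff algebra_simps)
  then show "conv cw k (\<lambda>n. ca (n - j)) n = conv cw k ca (n - k*j)" by (simp add: conv_def)
qed

lemma conv_delta: "conv cw k (\<lambda>n. if n = j then r else 0) = (\<lambda>n. r * cw (n - k*j))"
proof (intro ext)
  fix n
  have e: "(\<lambda>i. (if i = j then r else 0) * cw (n - k * i)) = (\<lambda>i. if i = j then r * cw (n - k * i) else 0)"
    by auto
  have "conv cw k (\<lambda>n. if n = j then r else 0) n = Sum_any (\<lambda>i. if i = j then r * cw (n - k * i) else 0)"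
    unfolding conv_def e by (rule refl)
  also have "\<dots> = r * cw (n - k*j)" by (rule Sum_any.delta)
  finally show "conv cw k (\<lambda>n. if n = j then r else 0) n = r * cw (n - k*j)" .
qed

lemma conv_zero_r: "conv cw k (\<lambda>n. 0) = (\<lambda>n. 0)"
  by (simp add: conv_def fun_eq_iff)

lemma conv_zero_l: "conv (\<lambda>n. 0) k ca = (\<lambda>n. 0)"
  by (simp add: conv_def fun_eq_iff)

lemma conv_k0: "fin ca \<Longrightarrow> conv cw 0 ca = (\<lambda>n. Sum_any ca * cw n)"
  by (simp add: conv_def fun_eq_iff Sum_any_left_distrib)

lemma HomI:
  assumes "\<And>a. a \<in> Wmod (fst A) (snd A) \<Longrightarrow> m1 a \<in> Wmod (fst B) (snd B)"
    and "\<And>a b. a \<in> Wmod (fst A) (snd A) \<Longrightarrow> b \<in> Wmod (fst A) (snd A) \<Longrightarrow>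
         m1 (\<lambda>y f. a y f + b y f) = (\<lambda>y f. m1 a y f + m1 b y f)"
    and "\<And>r a. a \<in> Wmod (fst A) (snd A) \<Longrightarrow> m1 (\<lambda>y f. r * a y f) = (\<lambda>y f. r * m1 a y f)"
    and "\<And>g. g \<in> FG (snd A) \<Longrightarrow> m2 g \<in> FG (snd B)"
    and "\<And>g h. g \<in> FG (snd A) \<Longrightarrow> h \<in> FG (snd A) \<Longrightarrow> m2 (fg_mult g h) = fg_mult (m2 g) (m2 h)"
    and "\<And>a g. a \<in> Wmod (fst A) (snd A) \<Longrightarrow> g \<in> FG (snd A) \<Longrightarrow> m1 (act a g) = act (m1 a) (m2 g)"
    and "\<And>a. a \<notin> Wmod (fst A) (snd A) \<Longrightarrow> m1 a = zeroW"
    and "\<And>g. g \<notin> FG (snd A) \<Longrightarrow> m2 g = []"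
  shows "(m1, m2) \<in> Hom A B"
  using assms unfolding Hom_def by blast

lemma HomD:
  assumes "m \<in> Hom A B"
  shows "\<And>a. a \<in> Wmod (fst A) (snd A) \<Longrightarrow> fst m a \<in> Wmod (fst B) (snd B)"
    and "\<And>a b. a \<in> Wmod (fst A) (snd A) \<Longrightarrow> b \<in> Wmod (fst A) (snd A) \<Longrightarrow>
         fst m (\<lambda>y f. a y f + b y f) = (\<lambda>y f. fst m a y f + fst m b y f)"
    and "\<And>r a. a \<in> Wmod (fst A) (snd A) \<Longrightarrow> fst m (\<lambda>y f. r * a y f) = (\<lambda>y f. r * fst m a y f)"
    and "\<And>g. g \<in> FG (snd A) \<Longrightarrow> snd m g \<in> FG (snd B)"
    and "\<And>g h. g \<in> FG (snd A) \<Longrightarrow> h \<in> FG (snd A) \<Longrightarrow> snd m (fg_mult g h) = fg_mult (snd m g) (snd m h)"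
    and "\<And>a g. a \<in> Wmod (fst A) (snd A) \<Longrightarrow> g \<in> FG (snd A) \<Longrightarrow> fst m (act a g) = act (fst m a) (snd m g)"
    and "\<And>a. a \<notin> Wmod (fst A) (snd A) \<Longrightarrow> fst m a = zeroW"
    and "\<And>g. g \<notin> FG (snd A) \<Longrightarrow> snd m g = []"
  using assms unfolding Hom_def by (auto simp: case_prod_beta)

context fixes y1 :: 'y and x1 :: 'x
begin

definition N :: "(int \<Rightarrow> 'r::comm_ring_1) \<Rightarrow> int \<Rightarrow> ('y,'x,'r) mor" where
  "N c k = ((\<lambda>a. if a \<in> Wmod {y1} {x1} then emb y1 x1 (conv c k (coef y1 x1 a)) else zeroW),
            (\<lambda>g. if g \<in> FG {x1} then pw x1 (k * idx g) else []))"

lemma N_Hom: "fin c \<Longrightarrow> N c k \<in> Hom ({y1},{x1}) ({y1},{x1})"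
  unfolding N_def
proof (rule HomI, goal_cases)
  case (1 a)
  then have a: "a \<in> Wmod {y1} {x1}" by simp
  show ?case using 1 Wmod_D[OF a] by (auto intro!: Wmod_emb conv_fin)
next
  case (2 a b)
  then have a: "a \<in> Wmod {y1} {x1}" and b: "b \<in> Wmod {y1} {x1}" by simp_all
  then have "(\<lambda>y f. a y f + b y f) \<in> Wmod {y1} {x1}" by (simp add: Wmod_add)
  then show ?case using a b Wmod_D[OF a] Wmod_D[OF b]
    by (simp add: coef_add conv_add emb_add)
next
  case (3 r a)
  then have a: "a \<in> Wmod {y1} {x1}" by simp
  then have "(\<lambda>y f. r * a y f) \<in> Wmod {y1} {x1}" by (simp add: Wmod_smult)
  then show ?case using a Wmod_D[OF a]
    by (simp add: coef_smult conv_smult emb_smult)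
next
  case (4 g) then show ?case by simp
next
  case (5 g h) then show ?case by (simp add: fg_mult_FG idx_mult distrib_left)
next
  case (6 a g)
  then have a0: "a \<in> Wmod {y1} {x1}" and g0: "g \<in> FG {x1}" by simp_all
  let ?ca = "coef y1 x1 a"
  have a: "a = emb y1 x1 ?ca" "fin ?ca" using Wmod_D[OF a0] by auto
  have g: "g = pw x1 (idx g)" using FG_pw[OF g0] .
  have "act a g = act (emb y1 x1 ?ca) (pw x1 (idx g))" using a g by simp
  also have "\<dots> = emb y1 x1 (\<lambda>n. ?ca (n - idx g))" by (rule act_emb)
  finally have ag: "act a g = emb y1 x1 (\<lambda>n. ?ca (n - idx g))" .
  have fs: "fin (\<lambda>n. ?ca (n - idx g))"
  proof -
    have "{n. ?ca (n - idx g) \<noteq> 0} = (\<lambda>n. n + idx g) ` {n. ?ca n \<noteq> 0}"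
      by (auto intro!: image_eqI[of _ _ "_ - idx g"])
    then show ?thesis using a(2) by simp
  qed
  have "act (emb y1 x1 (conv c (k) ?ca)) (pw x1 (k * idx g)) =
     emb y1 x1 (\<lambda>n. conv c k ?ca (n - k * idx g))"
    by (rule act_emb)
  moreover have "act a g \<in> Wmod {y1} {x1}" using ag fs by (simp add: Wmod_emb)
  ultimately show ?case using a0 g0 ag by (simp add: conv_shift)
next
  case (7 a) then show ?case by simp
next
  case (8 g) then show ?case by simp
qed

end



lemma zeroW_Wmod_gen: "zeroW \<in> Wmod Y X"
  by (simp add: Wmod_def zeroW_def)

lemma nil_FG: "[] \<in> FG X"
  by (simp add: FG_def)

lemma hom_fst_zero: "m \<in> Hom A B \<Longrightarrow> fst m zeroW = zeroW"
proof -
  assume m: "m \<in> Hom A B"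
  have "fst m (\<lambda>y f. 0 * zeroW y f) = (\<lambda>y f. 0 * fst m zeroW y f)"
    by (rule HomD(3)[OF m zeroW_Wmod_gen])
  moreover have "(\<lambda>y f. (0::'c) * zeroW y f) = zeroW" by (simp add: zeroW_def)
  ultimately show ?thesis by (simp add: zeroW_def)
qed

lemma hom_snd_nil: "m \<in> Hom A B \<Longrightarrow> snd m [] = []"
proof -
  assume m: "m \<in> Hom A B"
  let ?u = "snd m []"
  have ru: "reduced ?u" using HomD(4)[OF m nil_FG] FG_reduced by blast
  have uu: "?u = fg_mult ?u ?u" using HomD(5)[OF m nil_FG nil_FG] by simp
  have "?u = fg_mult (fg_inv ?u) (fg_mult ?u ?u)" using fg_inv_left[OF ru] by simp
  also have "\<dots> = fg_mult (fg_inv ?u) (fg_mult ?u [])" using uu fg_mult_Nil_right[OF ru] by simp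
  also have "\<dots> = []" using fg_inv_left[of "[]"] by simp
  finally show ?thesis .
qed

lemma hom_comp:
  fixes f g :: "('y,'x,'r::comm_ring_1) mor"
  assumes f: "f \<in> Hom A B" and g: "g \<in> Hom B C"
  shows "comp g f \<in> Hom A C"
  unfolding comp_def
proof (rule HomI)
  fix a :: "('y,'x,'r) elt" assume a: "a \<in> Wmod (fst A) (snd A)"
  show "(fst g \<circ> fst f) a \<in> Wmod (fst C) (snd C)" using HomD(1)[OF g HomD(1)[OF f a]] by simp
next
  fix a b :: "('y,'x,'r) elt" assume a: "a \<in> Wmod (fst A) (snd A)" and b: "b \<in> Wmod (fst A) (snd A)"
  show "(fst g \<circ> fst f) (\<lambda>y h. a y h + b y h) = (\<lambda>y h. (fst g \<circ> fst f) a y h + (fst g \<circ> fst f) b y h)"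
    using HomD(2)[OF f a b] HomD(2)[OF g HomD(1)[OF f a] HomD(1)[OF f b]] by simp
next
  fix r :: 'r and a :: "('y,'x,'r) elt" assume a: "a \<in> Wmod (fst A) (snd A)"
  show "(fst g \<circ> fst f) (\<lambda>y h. r * a y h) = (\<lambda>y h. r * (fst g \<circ> fst f) a y h)"
    using HomD(3)[OF f a] HomD(3)[OF g HomD(1)[OF f a]] by simp
next
  fix x assume x: "x \<in> FG (snd A)"
  show "(snd g \<circ> snd f) x \<in> FG (snd C)" using HomD(4)[OF g HomD(4)[OF f x]] by simp
next
  fix x z assume x: "x \<in> FG (snd A)" and z: "z \<in> FG (snd A)"
  show "(snd g \<circ> snd f) (fg_mult x z) = fg_mult ((snd g \<circ> snd f) x) ((snd g \<circ> snd f) z)"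
    using HomD(5)[OF f x z] HomD(5)[OF g HomD(4)[OF f x] HomD(4)[OF f z]] by simp
next
  fix a :: "('y,'x,'r) elt" and x assume a: "a \<in> Wmod (fst A) (snd A)" and x: "x \<in> FG (snd A)"
  show "(fst g \<circ> fst f) (act a x) = act ((fst g \<circ> fst f) a) ((snd g \<circ> snd f) x)"
    using HomD(6)[OF f a x] HomD(6)[OF g HomD(1)[OF f a] HomD(4)[OF f x]] by simp
next
  fix a :: "('y,'x,'r) elt" assume a: "a \<notin> Wmod (fst A) (snd A)"
  show "(fst g \<circ> fst f) a = zeroW" using HomD(7)[OF f a] hom_fst_zero[OF g] by simp
next
  fix x assume x: "x \<notin> FG (snd A)"
  show "(snd g \<circ> snd f) x = []" using HomD(8)[OF f x] hom_snd_nil[OF g] by simp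
qed

context fixes y1 :: 'y and x1 :: 'x
begin

lemma pw_1: "pw x1 1 = [(x1,True)]"
  by (simp add: pw_def)

lemma delta_Wmod: "delta y1 [] \<in> Wmod {y1} {x1}"
  by (simp add: delta_emb[of y1 x1] Wmod_emb)

lemma conv_delta0: "conv c k (\<lambda>n. if n = 0 then 1 else 0) = c"
  using conv_delta[of c k 0 1] by simp

lemma N_delta:
  fixes c :: "int \<Rightarrow> 'r::comm_ring_1"
  shows "fst (N y1 x1 c k) (delta y1 []) = emb y1 x1 c"
proof -
  have d: "delta y1 [] = emb y1 x1 (\<lambda>n. if n = 0 then (1::'r) else 0)" by (rule delta_emb)
  have "(delta y1 [] :: ('y,'x,'r) elt) \<in> Wmod {y1} {x1}" by (rule delta_Wmod)
  then show ?thesis by (simp add: N_def d conv_delta0)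
qed

lemma N_x: "snd (N y1 x1 c k) [(x1,True)] = pw x1 k"
  using pw_FG[of x1 1] by (simp add: N_def pw_1[symmetric])

lemma N_inj: "N y1 x1 c k = N y1 x1 c' k' \<Longrightarrow> c = c' \<and> k = k'"
  by (metis N_delta N_x emb_inj pw_inj)

lemma hom_snd_pw:
  assumes m: "m \<in> Hom ({y1},{x1}) ({y1},{x1})" and mx: "snd m [(x1,True)] = pw x1 k"
  shows "snd m (pw x1 n) = pw x1 (k * n)"
proof (induct n rule: int_induct[where k=0])
  case base then show ?case using hom_snd_nil[OF m] by simp
next
  case (step1 i)
  have "snd m (pw x1 (i+1)) = snd m (fg_mult (pw x1 i) (pw x1 1))" by simp
  also have "\<dots> = fg_mult (snd m (pw x1 i)) (snd m (pw x1 1))"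
    by (rule HomD(5)[OF m]) simp_all
  also have "\<dots> = pw x1 (k * (i+1))" using step1 mx by (simp add: pw_1 distrib_left)
  finally show ?case .
next
  case (step2 i)
  have "snd m (pw x1 (i-1)) \<in> FG {x1}" using HomD(4)[OF m] by simp
  from FG_pw[OF this] obtain t where t: "snd m (pw x1 (i-1)) = pw x1 t" by blast
  have "snd m (pw x1 i) = snd m (fg_mult (pw x1 (i-1)) (pw x1 1))" by simp
  also have "\<dots> = fg_mult (snd m (pw x1 (i-1))) (snd m (pw x1 1))"
    by (rule HomD(5)[OF m]) simp_all
  also have "\<dots> = pw x1 (t + k)" using t mx by (simp add: pw_1)
  finally have "t + k = k * i" using step2 by simp
  then have "t = k * (i - 1)" by (simp add: algebra_simps)
  then show ?case using t by simp
qed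

lemma emb_deltai:
  fixes r :: "'r::comm_ring_1"
  shows "emb y1 x1 (\<lambda>n. if n = i then r else 0) = (\<lambda>y f. r * act (delta y1 []) (pw x1 i) y f)"
proof -
  have "act (delta y1 [] :: ('y,'x,'r) elt) (pw x1 i) = emb y1 x1 (\<lambda>n. if n - i = 0 then 1 else 0)"
    by (simp add: delta_emb[of y1 x1] act_emb)
  also have "(\<lambda>n. if n - i = 0 then (1::'r) else 0) = (\<lambda>n. if n = i then 1 else 0)" by auto
  finally have a: "act (delta y1 [] :: ('y,'x,'r) elt) (pw x1 i) = emb y1 x1 (\<lambda>n. if n = i then 1 else 0)" .
  have "(\<lambda>n. if n = i then r else 0) = (\<lambda>n. r * (if n = i then 1 else 0))" by auto
  then show ?thesis unfolding a emb_smult by simp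
qed

lemma hom_fst_emb:
  assumes m: "m \<in> Hom ({y1},{x1}) ({y1},{x1})" and md: "fst m (delta y1 []) = emb y1 x1 c"
    and mx: "snd m [(x1,True)] = pw x1 k"
  shows "fin ca \<Longrightarrow> fst m (emb y1 x1 ca) = emb y1 x1 (conv c k ca)"
proof -
  have "finite S \<Longrightarrow> \<forall>ca. {n. ca n \<noteq> 0} = S \<longrightarrow> fst m (emb y1 x1 ca) = emb y1 x1 (conv c k ca)" for S
  proof (induct S rule: finite_induct)
    case empty
    then show ?case using hom_fst_zero[OF m] by (auto simp: emb_zero conv_zero_r)
  next
    case (insert i S)
    show ?case
    proof (intro allI impI)
      fix ca :: "int \<Rightarrow> 'a" assume sup: "{n. ca n \<noteq> 0} = insert i S"
      let ?cb = "ca(i := 0)"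
      let ?r = "ca i"
      let ?d = "\<lambda>n. if n = i then ?r else 0"
      let ?v = "act (delta y1 []) (pw x1 i)"
      have supb: "{n. ?cb n \<noteq> 0} = S" using sup insert(2) by auto
      have fb: "fin ?cb" using supb insert(1) by simp
      have fd: "fin ?d" by (rule finite_subset[of _ "{i}"]) auto
      have cad: "ca = (\<lambda>n. ?cb n + ?d n)" by auto
      have vW: "?v \<in> Wmod {y1} {x1}"
        using HomD(6)[OF hom_comp[OF N_Hom[of "\<lambda>n. 0" y1 x1 0] N_Hom[of "\<lambda>n. 0" y1 x1 0]]]
        by (simp add: delta_emb[of y1 x1] act_emb Wmod_emb)
      have bW: "emb y1 x1 ?cb \<in> Wmod {y1} {x1}" using fb by (rule Wmod_emb)
      have rvW: "(\<lambda>y f. ?r * ?v y f) \<in> Wmod {y1} {x1}" using vW by (rule Wmod_smult)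
      have "emb y1 x1 ca = (\<lambda>y f. emb y1 x1 ?cb y f + emb y1 x1 ?d y f)"
        by (subst cad) (simp add: emb_add)
      also have "\<dots> = (\<lambda>y f. emb y1 x1 ?cb y f + (\<lambda>y f. ?r * ?v y f) y f)"
        by (simp add: emb_deltai)
      finally have e1: "emb y1 x1 ca = (\<lambda>y f. emb y1 x1 ?cb y f + (\<lambda>y f. ?r * ?v y f) y f)" .
      have "fst m (emb y1 x1 ca) = (\<lambda>y f. fst m (emb y1 x1 ?cb) y f + fst m (\<lambda>y f. ?r * ?v y f) y f)"
        unfolding e1 by (rule HomD(2)[OF m]) (use bW rvW in simp_all)
      also have "fst m (\<lambda>y f. ?r * ?v y f) = (\<lambda>y f. ?r * fst m ?v y f)"
        using HomD(3)[OF m] vW by simp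
      also have "fst m ?v = act (fst m (delta y1 [])) (snd m (pw x1 i))"
        by (rule HomD(6)[OF m]) (simp_all add: delta_Wmod)
      also have "\<dots> = act (emb y1 x1 c) (pw x1 (k * i))"
        using md hom_snd_pw[OF m mx] by simp
      also have "\<dots> = emb y1 x1 (\<lambda>n. c (n - k * i))" by (rule act_emb)
      also have "fst m (emb y1 x1 ?cb) = emb y1 x1 (conv c k ?cb)"
        using insert(3) supb by blast
      finally have l: "fst m (emb y1 x1 ca) = (\<lambda>y f. emb y1 x1 (conv c k ?cb) y f + ?r * emb y1 x1 (\<lambda>n. c (n - k * i)) y f)" .
      have "conv c k ca = (\<lambda>n. conv c k ?cb n + conv c k ?d n)"
        by (subst cad) (rule conv_add[OF fb fd])
      also have "conv c k ?d = (\<lambda>n. ?r * c (n - k * i))" by (rule conv_delta)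
      finally have r: "conv c k ca = (\<lambda>n. conv c k ?cb n + ?r * c (n - k * i))" .
      show "fst m (emb y1 x1 ca) = emb y1 x1 (conv c k ca)"
        unfolding l r by (simp add: emb_add[symmetric] emb_smult[symmetric])
    qed
  qed
  then show "fin ca \<Longrightarrow> ?thesis" by blast
qed

end



context fixes y1 :: 'y and x1 :: 'x
begin

lemma N_unique:
  assumes m: "m \<in> Hom ({y1},{x1}) ({y1},{x1})" and md: "fst m (delta y1 []) = emb y1 x1 c"
    and mx: "snd m [(x1,True)] = pw x1 k" and fc: "fin c"
  shows "m = N y1 x1 c k"
proof (rule prod_eqI)
  show "fst m = fst (N y1 x1 c k)"
  proof (rule ext)
    fix a
    show "fst m a = fst (N y1 x1 c k) a"
    proof (cases "a \<in> Wmod {y1} {x1}")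
      case True
      then have "fst m a = fst m (emb y1 x1 (coef y1 x1 a))" using Wmod_D(2)[OF True] by simp
      also have "\<dots> = emb y1 x1 (conv c k (coef y1 x1 a))"
        by (rule hom_fst_emb[OF m md mx Wmod_D(1)[OF True]])
      finally show ?thesis using True by (simp add: N_def)
    next
      case False
      then show ?thesis using HomD(7)[OF m] by (simp add: N_def)
    qed
  qed
next
  show "snd m = snd (N y1 x1 c k)"
  proof (rule ext)
    fix g
    show "snd m g = snd (N y1 x1 c k) g"
    proof (cases "g \<in> FG {x1}")
      case True
      then have g: "g = pw x1 (idx g)" by (rule FG_pw)
      have "snd m g = pw x1 (k * idx g)" by (subst g, rule hom_snd_pw[OF m mx])
      then show ?thesis using True by (simp add: N_def)
    next
      case False
      then show ?thesis using HomD(8)[OF m] by (simp add: N_def)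
    qed
  qed
qed

lemma Hom_N:
  fixes m :: "('y,'x,'r::comm_ring_1) mor"
  assumes m: "m \<in> Hom ({y1},{x1}) ({y1},{x1})"
  obtains c k where "fin c" "m = N y1 x1 c k"
proof -
  have "fst m (delta y1 []) \<in> Wmod {y1} {x1}"
    using HomD(1)[OF m, of "delta y1 []"] delta_Wmod[of y1 x1] by simp
  note w = Wmod_D[OF this]
  have "snd m [(x1,True)] \<in> FG {x1}" using HomD(4)[OF m, of "[(x1,True)]"] pw_FG[of x1 1] by (simp add: pw_1)
  note g = FG_pw[OF this]
  have "m = N y1 x1 (coef y1 x1 (fst m (delta y1 []))) (idx (snd m [(x1,True)]))"
    by (rule N_unique[OF m w(2) g w(1)])
  then show ?thesis using that w(1) by blast
qed

lemma comp_N: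
  assumes "fin c" "fin c'"
  shows "comp (N y1 x1 c k) (N y1 x1 c' k') = N y1 x1 (conv c k c') (k * k')"
proof (rule N_unique)
  show "comp (N y1 x1 c k) (N y1 x1 c' k') \<in> Hom ({y1},{x1}) ({y1},{x1})"
    by (rule hom_comp[OF N_Hom N_Hom]) (use assms in auto)
  have "emb y1 x1 c' \<in> Wmod {y1} {x1}" using assms(2) by (rule Wmod_emb)
  then show "fst (comp (N y1 x1 c k) (N y1 x1 c' k')) (delta y1 []) = emb y1 x1 (conv c k c')"
    by (simp add: comp_def N_delta, simp add: N_def)
  show "snd (comp (N y1 x1 c k) (N y1 x1 c' k')) [(x1,True)] = pw x1 (k * k')"
    by (simp add: comp_def N_x, simp add: N_def)
  show "fin (conv c k c')" using assms by (rule conv_fin)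
qed

lemma nu_N:
  assumes w: "w \<in> Wmod {y1} {x1}" and g: "g \<in> FG {x1}"
  shows "nu y1 x1 w g = N y1 x1 (coef y1 x1 w) (idx g)"
  unfolding nu_def
proof (rule the_equality)
  note ww = Wmod_D[OF w]
  show "N y1 x1 (coef y1 x1 w) (idx g) \<in> Hom ({y1}, {x1}) ({y1}, {x1}) \<and>
    fst (N y1 x1 (coef y1 x1 w) (idx g)) (delta y1 []) = w \<and> snd (N y1 x1 (coef y1 x1 w) (idx g)) [(x1, True)] = g"
    using N_Hom[OF ww(1)] N_delta N_x ww(2) FG_pw[OF g] by metis
  fix m assume "m \<in> Hom ({y1}, {x1}) ({y1}, {x1}) \<and> fst m (delta y1 []) = w \<and> snd m [(x1, True)] = g"
  then show "m = N y1 x1 (coef y1 x1 w) (idx g)"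
    using N_unique ww FG_pw[OF g] by metis
qed

end



lemma auto_fix_zero:
  assumes bij: "bij_betw P H H" and hom: "\<forall>a\<in>H. \<forall>b\<in>H. P (cmp a b) = cmp (P a) (P b)"
    and zH: "z \<in> H" and zz: "\<forall>n\<in>H. cmp z n = z \<and> cmp n z = z"
  shows "P z = z"
proof -
  have "z \<in> P ` H" using bij zH by (simp add: bij_betw_def)
  then obtain n0 where n0: "n0 \<in> H" "P n0 = z" by blast
  have Pz: "P z \<in> H" using bij zH by (rule bij_betw_apply)
  have "P z = P (cmp z n0)" using zz n0 by simp
  also have "\<dots> = cmp (P z) (P n0)" using hom zH n0 by simp
  also have "\<dots> = z" using n0 zz Pz by simp
  finally show ?thesis .
qed

lemma image_fix:
  assumes bij: "bij_betw P H H" and inv: "\<forall>m\<in>H. Q (P m) = Q m"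
  shows "P ` {m\<in>H. Q m} = {m\<in>H. Q m}"
proof
  show "P ` {m\<in>H. Q m} \<subseteq> {m\<in>H. Q m}" using bij inv by (auto intro: bij_betw_apply)
next
  show "{m\<in>H. Q m} \<subseteq> P ` {m\<in>H. Q m}"
  proof
    fix m assume m: "m \<in> {m\<in>H. Q m}"
    then have "m \<in> P ` H" using bij by (simp add: bij_betw_def)
    then obtain m0 where "m0 \<in> H" "m = P m0" by blast
    then show "m \<in> P ` {m\<in>H. Q m}" using m inv by auto
  qed
qed

context fixes y1 :: 'y and x1 :: 'x
begin

lemma fin_zero: "fin (\<lambda>n::int. 0::'r::comm_ring_1)" by simp

lemma fin_delta: "fin (\<lambda>n::int. if n = j then (r::'r::comm_ring_1) else 0)"
  by (rule finite_subset[of _ "{j}"]) auto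

lemma zero_comp:
  fixes c :: "int \<Rightarrow> 'r::comm_ring_1"
  assumes "fin c"
  shows "comp (N y1 x1 (\<lambda>n. 0) j) (N y1 x1 c k) = N y1 x1 (\<lambda>n. 0) (j * k)"
    and "comp (N y1 x1 c k) (N y1 x1 (\<lambda>n. 0) j) = N y1 x1 (\<lambda>n. 0) (j * k)"
proof -
  show "comp (N y1 x1 (\<lambda>n. 0) j) (N y1 x1 c k) = N y1 x1 (\<lambda>n. 0) (j * k)"
    using comp_N[OF fin_zero assms, of y1 x1 j k] by (simp add: conv_zero_l)
  show "comp (N y1 x1 c k) (N y1 x1 (\<lambda>n. 0) j) = N y1 x1 (\<lambda>n. 0) (j * k)"
    using comp_N[OF assms fin_zero, of y1 x1 k j] by (simp add: conv_zero_r mult.commute)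
qed

lemma charac:
  fixes f :: "('y,'x,'r::comm_ring_1) mor"
  assumes f: "f \<in> Hom ({y1},{x1}) ({y1},{x1})" and nz: "f \<noteq> N y1 x1 (\<lambda>n. 0) 0" and idem: "comp f f = f"
    and cen: "\<forall>n\<in>Hom ({y1},{x1}) ({y1},{x1}). comp f n = comp n f"
    and cen2: "\<forall>n\<in>Hom ({y1},{x1}) ({y1},{x1}). \<forall>n'\<in>Hom ({y1},{x1}) ({y1},{x1}). comp (comp f n) n' = comp n' (comp f n)"
  shows "f = N y1 x1 (\<lambda>n. 0) 1"
proof -
  obtain p k where fp: "fin p" and fe: "f = N y1 x1 p k" using Hom_N[OF f] by blast
  let ?d0 = "\<lambda>n::int. if n = 0 then (1::'r) else 0"
  let ?d1 = "\<lambda>n::int. if n = 1 then (1::'r) else 0"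
  let ?s = "Sum_any p"
  have fd0: "fin ?d0" and fd1: "fin ?d1" by (rule fin_delta)+
  have "comp f f = N y1 x1 (conv p k p) (k*k)" unfolding fe by (rule comp_N[OF fp fp])
  then have "N y1 x1 (conv p k p) (k*k) = N y1 x1 p k" using idem fe by simp
  then have "k * k = k" by (rule conjunct2[OF N_inj])
  then have "k * (k - 1) = 0" by (simp add: algebra_simps)
  then have k01: "k = 0 \<or> k = 1" by simp
  have n0H: "N y1 x1 ?d0 0 \<in> Hom ({y1},{x1}) ({y1},{x1})" by (rule N_Hom[OF fd0])
  have "comp f (N y1 x1 ?d0 0) = N y1 x1 (conv p k ?d0) (k*0)" unfolding fe by (rule comp_N[OF fp fd0])
  then have "comp f (N y1 x1 ?d0 0) = N y1 x1 p 0" by (simp add: conv_delta0)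
  moreover have "comp (N y1 x1 ?d0 0) f = N y1 x1 (conv ?d0 0 p) (0*k)" unfolding fe by (rule comp_N[OF fd0 fp])
  then have "comp (N y1 x1 ?d0 0) f = N y1 x1 (\<lambda>n. ?s * ?d0 n) 0" by (simp add: conv_k0[OF fp])
  moreover have "comp f (N y1 x1 ?d0 0) = comp (N y1 x1 ?d0 0) f" using cen n0H by blast
  ultimately have "N y1 x1 p 0 = N y1 x1 (\<lambda>n. ?s * ?d0 n) 0" by simp
  then have "p = (\<lambda>n. ?s * ?d0 n)" by (rule conjunct1[OF N_inj])
  then obtain s where pn: "\<And>n. p n = s * ?d0 n" by metis
  show ?thesis
  proof (cases "k = 0")
    case True
    have n1H: "N y1 x1 ?d1 0 \<in> Hom ({y1},{x1}) ({y1},{x1})" by (rule N_Hom[OF fd1])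
    have "conv p 0 ?d1 = p" using conv_delta[of p 0 1 1] by simp
    moreover have "comp f (N y1 x1 ?d1 0) = N y1 x1 (conv p k ?d1) (k*0)" unfolding fe by (rule comp_N[OF fp fd1])
    ultimately have "comp f (N y1 x1 ?d1 0) = N y1 x1 p 0" using True by simp
    moreover have "comp (N y1 x1 ?d1 0) f = N y1 x1 (conv ?d1 0 p) (0*k)" unfolding fe by (rule comp_N[OF fd1 fp])
    then have "comp (N y1 x1 ?d1 0) f = N y1 x1 (\<lambda>n. ?s * ?d1 n) 0" by (simp add: conv_k0[OF fp])
    moreover have "comp f (N y1 x1 ?d1 0) = comp (N y1 x1 ?d1 0) f" using cen n1H by blast
    ultimately have "N y1 x1 p 0 = N y1 x1 (\<lambda>n. ?s * ?d1 n) 0" by simp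
    then have "p = (\<lambda>n. ?s * ?d1 n)" by (rule conjunct1[OF N_inj])
    then have "p 0 = ?s * ?d1 0" by (rule fun_cong)
    then have "p 0 = 0" by simp
    then have "s = 0" using pn[of 0] by simp
    then have "p = (\<lambda>n. 0)" using pn by auto
    then have False using nz fe True by simp
    then show ?thesis ..
  next
    case False
    then have k1: "k = 1" using k01 by simp
    let ?q = "\<lambda>n. p (n - 1)"
    have fq: "fin ?q"
    proof -
      have "{n. ?q n \<noteq> 0} = (\<lambda>n. n + 1) ` {n. p n \<noteq> 0}"
        by (auto intro!: image_eqI[of _ _ "_ - 1"])
      then show ?thesis using fp by simp
    qed
    have n2H: "N y1 x1 ?d1 1 \<in> Hom ({y1},{x1}) ({y1},{x1})" by (rule N_Hom[OF fd1])
    have "conv p 1 ?d1 = ?q" using conv_delta[of p 1 1 1] by simp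
    moreover have "comp f (N y1 x1 ?d1 1) = N y1 x1 (conv p k ?d1) (k*1)" unfolding fe by (rule comp_N[OF fp fd1])
    ultimately have g: "comp f (N y1 x1 ?d1 1) = N y1 x1 ?q 1" using k1 by simp
    have "comp (N y1 x1 ?q 1) (N y1 x1 ?d0 0) = N y1 x1 (conv ?q 1 ?d0) (1*0)" by (rule comp_N[OF fq fd0])
    then have "comp (N y1 x1 ?q 1) (N y1 x1 ?d0 0) = N y1 x1 ?q 0" by (simp add: conv_delta0)
    moreover have "comp (N y1 x1 ?d0 0) (N y1 x1 ?q 1) = N y1 x1 (conv ?d0 0 ?q) (0*1)" by (rule comp_N[OF fd0 fq])
    then have "comp (N y1 x1 ?d0 0) (N y1 x1 ?q 1) = N y1 x1 (\<lambda>n. Sum_any ?q * ?d0 n) 0"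
      by (simp add: conv_k0[OF fq])
    moreover have "comp (comp f (N y1 x1 ?d1 1)) (N y1 x1 ?d0 0) = comp (N y1 x1 ?d0 0) (comp f (N y1 x1 ?d1 1))"
      using cen2 n2H n0H by blast
    ultimately have "N y1 x1 ?q 0 = N y1 x1 (\<lambda>n. Sum_any ?q * ?d0 n) 0" using g by simp
    then have "?q = (\<lambda>n. Sum_any ?q * ?d0 n)" by (rule conjunct1[OF N_inj])
    then have "?q 1 = Sum_any ?q * ?d0 1" by (rule fun_cong)
    then have "?q 1 = 0" by simp
    then have "s = 0" using pn[of 0] by simp
    then have "p = (\<lambda>n. 0)" using pn by auto
    then show ?thesis using fe k1 by simp
  qed
qed


lemma idx_nil: "idx [] = 0" by (simp add: idx_def)
lemma idx_x: "idx [(x1,True)] = 1" using idx_pw[of x1 1] by (simp add: pw_1)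
lemma coef_zeroW: "coef y1 x1 (zeroW :: ('y,'x,'r::comm_ring_1) elt) = (\<lambda>n. 0)"
  by (simp add: coef_def zeroW_def fun_eq_iff)

lemma Te_eq: "(T_e y1 x1 :: ('y,'x,'r::comm_ring_1) mor set) =
   {m \<in> Hom ({y1},{x1}) ({y1},{x1}). comp m (N y1 x1 (\<lambda>n. 0) 1) = N y1 x1 (\<lambda>n. 0) 0}"
proof (intro set_eqI iffI)
  fix m :: "('y,'x,'r) mor"
  assume "m \<in> T_e y1 x1"
  then obtain w where w: "w \<in> Wmod {y1} {x1}" and m: "m = nu y1 x1 w []" by (auto simp: T_e_def)
  have m': "m = N y1 x1 (coef y1 x1 w) 0" using nu_N[OF w nil_FG] m by (simp add: idx_nil)
  have fw: "fin (coef y1 x1 w)" by (rule Wmod_D(1)[OF w])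
  show "m \<in> {m \<in> Hom ({y1},{x1}) ({y1},{x1}). comp m (N y1 x1 (\<lambda>n. 0) 1) = N y1 x1 (\<lambda>n. 0) 0}"
    using N_Hom[OF fw] zero_comp(2)[OF fw, of 0 1] m' by simp
next
  fix m :: "('y,'x,'r) mor"
  assume "m \<in> {m \<in> Hom ({y1},{x1}) ({y1},{x1}). comp m (N y1 x1 (\<lambda>n. 0) 1) = N y1 x1 (\<lambda>n. 0) 0}"
  then have mH: "m \<in> Hom ({y1},{x1}) ({y1},{x1})" and me: "comp m (N y1 x1 (\<lambda>n. 0) 1) = N y1 x1 (\<lambda>n. 0) 0" by auto
  obtain c k where fc: "fin c" and m: "m = N y1 x1 c k" using Hom_N[OF mH] by blast
  have "N y1 x1 (\<lambda>n. 0::'r) (1 * k) = N y1 x1 (\<lambda>n. 0) 0" using me zero_comp(2)[OF fc, of k 1] m by simp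
  then have "1 * k = 0" by (rule conjunct2[OF N_inj])
  then have k: "k = 0" by simp
  have "emb y1 x1 c \<in> Wmod {y1} {x1}" using fc by (rule Wmod_emb)
  moreover have "nu y1 x1 (emb y1 x1 c) [] = m" using nu_N[OF calculation nil_FG] m k by (simp add: idx_nil)
  ultimately show "m \<in> T_e y1 x1" unfolding T_e_def by blast
qed

lemma Tx_eq: "(T_x y1 x1 :: ('y,'x,'r::comm_ring_1) mor set) =
   {m \<in> Hom ({y1},{x1}) ({y1},{x1}). comp m (N y1 x1 (\<lambda>n. 0) 1) = N y1 x1 (\<lambda>n. 0) 1}"
proof (intro set_eqI iffI)
  fix m :: "('y,'x,'r) mor"
  assume "m \<in> T_x y1 x1"
  then obtain w where w: "w \<in> Wmod {y1} {x1}" and m: "m = nu y1 x1 w [(x1,True)]" by (auto simp: T_x_def)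
  have xF: "[(x1,True)] \<in> FG {x1}" using pw_FG[of x1 1] by (simp add: pw_1)
  have m': "m = N y1 x1 (coef y1 x1 w) 1" using nu_N[OF w xF] m by (simp add: idx_x)
  have fw: "fin (coef y1 x1 w)" by (rule Wmod_D(1)[OF w])
  show "m \<in> {m \<in> Hom ({y1},{x1}) ({y1},{x1}). comp m (N y1 x1 (\<lambda>n. 0) 1) = N y1 x1 (\<lambda>n. 0) 1}"
    using N_Hom[OF fw] zero_comp(2)[OF fw, of 1 1] m' by simp
next
  fix m :: "('y,'x,'r) mor"
  assume "m \<in> {m \<in> Hom ({y1},{x1}) ({y1},{x1}). comp m (N y1 x1 (\<lambda>n. 0) 1) = N y1 x1 (\<lambda>n. 0) 1}"
  then have mH: "m \<in> Hom ({y1},{x1}) ({y1},{x1})" and me: "comp m (N y1 x1 (\<lambda>n. 0) 1) = N y1 x1 (\<lambda>n. 0) 1" by auto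
  obtain c k where fc: "fin c" and m: "m = N y1 x1 c k" using Hom_N[OF mH] by blast
  have "N y1 x1 (\<lambda>n. 0::'r) (1 * k) = N y1 x1 (\<lambda>n. 0) 1" using me zero_comp(2)[OF fc, of k 1] m by simp
  then have "1 * k = 1" by (rule conjunct2[OF N_inj])
  then have k: "k = 1" by simp
  have xF: "[(x1,True)] \<in> FG {x1}" using pw_FG[of x1 1] by (simp add: pw_1)
  have "emb y1 x1 c \<in> Wmod {y1} {x1}" using fc by (rule Wmod_emb)
  moreover have "nu y1 x1 (emb y1 x1 c) [(x1,True)] = m" using nu_N[OF calculation xF] m k by (simp add: idx_x)
  ultimately show "m \<in> T_x y1 x1" unfolding T_x_def by blast
qed

lemma T0_eq: "(T_0 y1 x1 :: ('y,'x,'r::comm_ring_1) mor set) =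
   {m \<in> Hom ({y1},{x1}) ({y1},{x1}). comp (N y1 x1 (\<lambda>n. 0) 1) m = m}"
proof (intro set_eqI iffI)
  fix m :: "('y,'x,'r) mor"
  assume "m \<in> T_0 y1 x1"
  then obtain g where g: "g \<in> FG {x1}" and m: "m = nu y1 x1 zeroW g" by (auto simp: T_0_def)
  have m': "m = N y1 x1 (\<lambda>n. 0) (idx g)" using nu_N[OF zeroW_Wmod[of y1 x1] g] m by (simp add: coef_zeroW)
  show "m \<in> {m \<in> Hom ({y1},{x1}) ({y1},{x1}). comp (N y1 x1 (\<lambda>n. 0) 1) m = m}"
  proof -
    have "N y1 x1 (\<lambda>n. 0::'r) (idx g) \<in> Hom ({y1},{x1}) ({y1},{x1})" by (rule N_Hom) simp
    moreover have "comp (N y1 x1 (\<lambda>n. 0::'r) 1) (N y1 x1 (\<lambda>n. 0) (idx g)) = N y1 x1 (\<lambda>n. 0) (idx g)"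
      using zero_comp(1)[OF fin_zero, of 1 "idx g"] by simp
    ultimately show ?thesis using m' by simp
  qed
next
  fix m :: "('y,'x,'r) mor"
  assume "m \<in> {m \<in> Hom ({y1},{x1}) ({y1},{x1}). comp (N y1 x1 (\<lambda>n. 0) 1) m = m}"
  then have mH: "m \<in> Hom ({y1},{x1}) ({y1},{x1})" and me: "comp (N y1 x1 (\<lambda>n. 0) 1) m = m" by auto
  obtain c k where fc: "fin c" and m: "m = N y1 x1 c k" using Hom_N[OF mH] by blast
  have "N y1 x1 (\<lambda>n. 0::'r) (1 * k) = N y1 x1 c k" using me zero_comp(1)[OF fc, of 1 k] m by simp
  then have "(\<lambda>n. 0) = c" by (rule conjunct1[OF N_inj])
  then have c: "c = (\<lambda>n. 0)" by simp
  have "nu y1 x1 zeroW (pw x1 k) = m" using nu_N[OF zeroW_Wmod[of y1 x1] pw_FG] m c by (simp add: coef_zeroW)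
  then have "m = nu y1 x1 zeroW (pw x1 k) \<and> pw x1 k \<in> FG {x1}" by simp
  then show "m \<in> T_0 y1 x1" unfolding T_0_def by blast
qed

lemma nu0x: "nu y1 x1 (zeroW :: ('y,'x,'r::comm_ring_1) elt) [(x1,True)] = N y1 x1 (\<lambda>n. 0) 1"
proof -
  have xF: "[(x1,True)] \<in> FG {x1}" using pw_FG[of x1 1] by (simp add: pw_1)
  show ?thesis using nu_N[OF zeroW_Wmod[of y1 x1] xF] by (simp add: coef_zeroW idx_x)
qed

end

theorem mainTheorem15:
  fixes Y0 :: "'y set" and X0 :: "'x set" and y1 :: 'y and x1 :: 'x
    and Po :: "'y set \<times> 'x set \<Rightarrow> 'y set \<times> 'x set"
    and Pm :: "'y set \<times> 'x set \<Rightarrow> 'y set \<times> 'x set \<Rightarrow> ('y,'x,'r::comm_ring_1) mor \<Rightarrow> ('y,'x,'r) mor"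
  assumes "infinite Y0" and "infinite X0" and "y1 \<in> Y0" and "x1 \<in> X0"
    and "cat_automorphism Y0 X0 Po Pm"
    and "Po ({y1},{x1}) = ({y1},{x1})"
  shows "Pm ({y1},{x1}) ({y1},{x1}) ` T_e y1 x1 = T_e y1 x1 \<and>
         Pm ({y1},{x1}) ({y1},{x1}) ` T_0 y1 x1 = T_0 y1 x1 \<and>
         Pm ({y1},{x1}) ({y1},{x1}) ` T_x y1 x1 = T_x y1 x1 \<and>
         Pm ({y1},{x1}) ({y1},{x1}) (nu y1 x1 zeroW [(x1,True)]) = nu y1 x1 zeroW [(x1,True)]"
proof -
  define A where "A = ({y1},{x1})"
  define H where "H = (Hom A A :: ('y,'x,'r) mor set)"
  define P where "P = Pm A A"
  define e where "e = (N y1 x1 (\<lambda>n. 0) 1 :: ('y,'x,'r) mor)"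
  define z where "z = (N y1 x1 (\<lambda>n. 0) 0 :: ('y,'x,'r) mor)"
  have AO: "A \<in> Obj Y0 X0" using assms(3,4) by (simp add: Obj_def A_def)
  have ca: "\<forall>A \<in> Obj Y0 X0. \<forall>B \<in> Obj Y0 X0. bij_betw (Pm A B) (Hom A B) (Hom (Po A) (Po B))"
    "\<forall>A \<in> Obj Y0 X0. \<forall>B \<in> Obj Y0 X0. \<forall>C \<in> Obj Y0 X0. \<forall>f \<in> Hom A B. \<forall>g \<in> Hom B C.
        Pm A C (comp g f) = comp (Pm B C g) (Pm A B f)"
    using assms(5) unfolding cat_automorphism_def by blast+
  have "bij_betw (Pm A A) (Hom A A) (Hom (Po A) (Po A))" using ca(1) AO by blast
  then have bij: "bij_betw P H H" using assms(6) unfolding P_def H_def A_def by simp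
  have hom: "\<forall>a\<in>H. \<forall>b\<in>H. P (comp a b) = comp (P a) (P b)"
    using ca(2) AO unfolding P_def H_def by blast
  have cl: "\<And>a b. a \<in> H \<Longrightarrow> b \<in> H \<Longrightarrow> comp a b \<in> H" unfolding H_def by (rule hom_comp)
  have inj: "\<And>a b. a \<in> H \<Longrightarrow> b \<in> H \<Longrightarrow> P a = P b \<longleftrightarrow> a = b"
    using bij unfolding bij_betw_def inj_on_def by blast
  have PH: "\<And>a. a \<in> H \<Longrightarrow> P a \<in> H" using bij by (rule bij_betw_apply)
  have surj: "\<And>n. n \<in> H \<Longrightarrow> \<exists>n0\<in>H. n = P n0" using bij unfolding bij_betw_def by blast
  have eH: "e \<in> H" unfolding e_def H_def A_def by (rule N_Hom) simp
  have zH: "z \<in> H" unfolding z_def H_def A_def by (rule N_Hom) simp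
  have eN: "\<And>n. n \<in> H \<Longrightarrow> \<exists>k. comp e n = N y1 x1 (\<lambda>n. 0) k \<and> comp n e = N y1 x1 (\<lambda>n. 0) k"
  proof -
    fix n assume "n \<in> H"
    then obtain c k where fc: "fin c" and n: "n = N y1 x1 c k" using Hom_N unfolding H_def A_def by metis
    show "\<exists>k. comp e n = N y1 x1 (\<lambda>n. 0) k \<and> comp n e = N y1 x1 (\<lambda>n. 0) k"
      using n unfolding e_def by (simp add: zero_comp[OF fc], blast)
  qed
  have zz: "\<forall>n\<in>H. comp z n = z \<and> comp n z = z"
  proof
    fix n assume "n \<in> H"
    then obtain c k where fc: "fin c" and n: "n = N y1 x1 c k" using Hom_N unfolding H_def A_def by metis
    show "comp z n = z \<and> comp n z = z"
      using n unfolding z_def by (simp add: zero_comp[OF fc])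
  qed
  have Pz: "P z = z" by (rule auto_fix_zero[OF bij hom zH zz])
  have ez: "e \<noteq> z"
  proof
    assume "e = z"
    then have "(1::int) = 0" unfolding e_def z_def by (rule conjunct2[OF N_inj])
    then show False by simp
  qed
  have ecen: "\<And>n. n \<in> H \<Longrightarrow> comp e n = comp n e" using eN by metis
  have ecen2: "\<And>n n'. n \<in> H \<Longrightarrow> n' \<in> H \<Longrightarrow> comp (comp e n) n' = comp n' (comp e n)"
  proof -
    fix n n' assume n: "n \<in> H" and n': "n' \<in> H"
    obtain k where k: "comp e n = N y1 x1 (\<lambda>n. 0) k" using eN[OF n] by blast
    obtain c k' where fc: "fin c" and n'e: "n' = N y1 x1 c k'" using Hom_N n' unfolding H_def A_def by metis
    show "comp (comp e n) n' = comp n' (comp e n)"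
      using k n'e by (simp add: zero_comp[OF fc] mult.commute)
  qed
  have ee: "comp e e = e" using eN[OF eH] unfolding e_def by (simp add: zero_comp(1)[OF fin_zero])
  define f where "f = P e"
  have fH: "f \<in> H" unfolding f_def using eH by (rule PH)
  have fz: "f \<noteq> z" unfolding f_def using inj[OF eH zH] Pz ez by simp
  have ff: "comp f f = f" unfolding f_def using hom eH ee by metis
  have fcen: "\<forall>n\<in>H. comp f n = comp n f"
  proof
    fix n assume "n \<in> H"
    then obtain n0 where n0: "n0 \<in> H" "n = P n0" using surj by blast
    have "comp f n = P (comp e n0)" using hom eH n0 unfolding f_def by simp
    also have "\<dots> = P (comp n0 e)" using ecen[OF n0(1)] by simp
    also have "\<dots> = comp n f" using hom eH n0 unfolding f_def by simp
    finally show "comp f n = comp n f" .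
  qed
  have fcen2: "\<forall>n\<in>H. \<forall>n'\<in>H. comp (comp f n) n' = comp n' (comp f n)"
  proof (intro ballI)
    fix n n' assume "n \<in> H" "n' \<in> H"
    then obtain n0 n0' where n0: "n0 \<in> H" "n = P n0" and n0': "n0' \<in> H" "n' = P n0'" using surj by metis
    have en0: "comp e n0 \<in> H" using cl eH n0 by simp
    have "comp (comp f n) n' = comp (P (comp e n0)) (P n0')" using hom eH n0 n0' unfolding f_def by simp
    also have "\<dots> = P (comp (comp e n0) n0')" using hom en0 n0' by simp
    also have "\<dots> = P (comp n0' (comp e n0))" using ecen2[OF n0(1) n0'(1)] by simp
    also have "\<dots> = comp n' (comp f n)" using hom eH n0 n0' en0 unfolding f_def by simp
    finally show "comp (comp f n) n' = comp n' (comp f n)" .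
  qed
  have Pe: "P e = e"
    using charac[of f y1 x1] fH fz ff fcen fcen2 unfolding f_def e_def z_def H_def A_def by blast
  have I1: "\<forall>m\<in>H. (comp (P m) e = z) = (comp m e = z)"
  proof
    fix m assume m: "m \<in> H"
    have "comp (P m) e = P (comp m e)" using hom m eH Pe by metis
    then show "(comp (P m) e = z) = (comp m e = z)" using inj[OF cl[OF m eH] zH] Pz by simp
  qed
  have I2: "\<forall>m\<in>H. (comp (P m) e = e) = (comp m e = e)"
  proof
    fix m assume m: "m \<in> H"
    have "comp (P m) e = P (comp m e)" using hom m eH Pe by metis
    then show "(comp (P m) e = e) = (comp m e = e)" using inj[OF cl[OF m eH] eH] Pe by simp
  qed
  have I3: "\<forall>m\<in>H. (comp e (P m) = P m) = (comp e m = m)"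
  proof
    fix m assume m: "m \<in> H"
    have "comp e (P m) = P (comp e m)" using hom m eH Pe by metis
    then show "(comp e (P m) = P m) = (comp e m = m)" using inj[OF cl[OF eH m] m] by simp
  qed
  have "T_e y1 x1 = {m \<in> H. comp m e = z}" unfolding H_def A_def e_def z_def by (rule Te_eq)
  then have "P ` T_e y1 x1 = T_e y1 x1" using image_fix[OF bij I1] by simp
  moreover have "T_0 y1 x1 = {m \<in> H. comp e m = m}" unfolding H_def A_def e_def by (rule T0_eq)
  then have "P ` T_0 y1 x1 = T_0 y1 x1" using image_fix[OF bij I3] by simp
  moreover have "T_x y1 x1 = {m \<in> H. comp m e = e}" unfolding H_def A_def e_def by (rule Tx_eq)
  then have "P ` T_x y1 x1 = T_x y1 x1" using image_fix[OF bij I2] by simp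
  moreover have "nu y1 x1 zeroW [(x1,True)] = e" unfolding e_def by (rule nu0x)
  then have "P (nu y1 x1 zeroW [(x1,True)]) = nu y1 x1 zeroW [(x1,True)]" using Pe by simp
  ultimately show ?thesis unfolding P_def A_def by blast
qed


end
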